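(* Let $m\in\mathbb{N}$, $d_1,\dots,d_m\in\mathbb{R}$, $\alpha_1,\dots,\alpha_m>0$, $\beta>0$, $\nu\in\mathbb{R}$, and let $G(\gamma)=\sum_{i=1}^{m}\frac{d_i\Gamma(1+\gamma)}{\Gamma(1+\gamma-\alpha_i)}$. Let $\gamma>-1$ be a root of multiplicity two of $G(\gamma)=\nu^2$ (i.e. $G(\gamma)=\nu^2$, $G'(\gamma)=0$, $G''(\gamma)\neq0$), and suppose there is no positive integer $n$ such that $\gamma+\beta n$ is another root of $G=\nu^2$. For $n\ge1$ set $$A_n=\sum_{i=1}^{m}\frac{d_i\Gamma(1+\gamma+\beta n)}{\Gamma(1+\gamma+\beta n-\alpha_i)},\qquad B_n=\sum_{i=1}^{m}\frac{d_i\Gamma(1+\gamma+\beta n)}{\Gamma(1+\gamma+\beta n-\alpha_i)}\big[\psi(1+\gamma+\beta n)-\psi(1+\gamma+\beta n-\alpha_i)\big],$$ let $c_0^1,c_0^2$ be arbitrary constants and define recursively for $n\ge0$ $$c_{n+1}^1=-\frac{c_n^1}{A_{n+1}-\nu^2},\qquad c_{n+1}^2=-\frac{c_n^2+c_{n+1}^1B_{n+1}}{A_{n+1}-\nu^2}.$$ Then the series $$u(x)=\ln x\sum_{n=0}^{\infty}c_n^1x^{\gamma+\beta n}+\sum_{n=0}^{\infty}c_n^2x^{\gamma+\beta n}$$ converges pointwise for every $x>0$.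
   Context: $\psi=\Gamma'/\Gamma$ is the digamma function. Quotients of Gamma functions are understood with $1/\Gamma$ entire. This series is the candidate second (logarithmic) solution of $\sum_{i=1}^{m}d_i x^{\alpha_i}D^{\alpha_i}u(x)+(x^\beta-\nu^2)u(x)=0$ with Caputo derivatives $D^{\alpha}$, associated with a double root of the characteristic equation. *)

theory Defs
  imports "HOL-Analysis.Analysis"
begin

definition Gsum :: "nat \<Rightarrow> (nat \<Rightarrow> real) \<Rightarrow> (nat \<Rightarrow> real) \<Rightarrow> real \<Rightarrow> real" where
  "Gsum m d \<alpha> g = (\<Sum>i=1..m. d i * Gamma (1 + g) * rGamma (1 + g - \<alpha> i))"

text \<open>B-type sum: d_i Gamma(a)/Gamma(b) [psi(a) - psi(b)] with a = 1+g, b = 1+g-alpha_i.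
  The product -psi(b)/Gamma(b) is read as its entire continuation deriv rGamma b
  (since rGamma' = - rGamma * Digamma).\<close>
definition Bsum :: "nat \<Rightarrow> (nat \<Rightarrow> real) \<Rightarrow> (nat \<Rightarrow> real) \<Rightarrow> real \<Rightarrow> real" where
  "Bsum m d \<alpha> g = (\<Sum>i=1..m. d i * Gamma (1 + g) *
      (Digamma (1 + g) * rGamma (1 + g - \<alpha> i) + deriv rGamma (1 + g - \<alpha> i)))"

end

theory Submission imports Defs "HOL-Real_Asymp.Real_Asymp" begin

lemma Digamma_lower:
  assumes "(x::real) \<ge> 2"
  shows "Digamma x \<ge> ln (x - 1) - euler_mascheroni"
proof -
  define n where "n = nat \<lfloor>x\<rfloor> - 1"
  have fl: "\<lfloor>x\<rfloor> \<ge> 2" using assms by linarith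
  have rn: "real (Suc n) = of_int \<lfloor>x\<rfloor>" using fl unfolding n_def by simp
  have "Digamma (real (Suc n)) \<le> Digamma x"
    by (rule Digamma_real_mono) (simp, use rn of_int_floor_le[of x] in linarith)
  moreover have "Digamma (real (Suc n)) = harm n - euler_mascheroni"
    using Digamma_of_nat[of n] by simp
  moreover have "harm n \<ge> ln (real n + 1)" by (rule harm_ge_ln)
  moreover have "ln (x - 1) \<le> ln (real n + 1)"
    using rn assms by (subst ln_le_cancel_iff) (auto, linarith)
  ultimately show ?thesis by linarith
qed

lemma Digamma_at_top: "filterlim (Digamma :: real \<Rightarrow> real) at_top at_top"
proof (rule filterlim_at_top_mono[of "\<lambda>x. ln (x - 1) - euler_mascheroni"])
  show "filterlim (\<lambda>x::real. ln (x - 1) - euler_mascheroni) at_top at_top" by real_asymp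
  show "eventually (\<lambda>x::real. ln (x - 1) - euler_mascheroni \<le> Digamma x) at_top"
    using eventually_ge_at_top[of "2::real"] by (rule eventually_mono) (rule Digamma_lower)
qed

lemma Gamma_ratio_bound:
  assumes "(x::real) \<ge> 2" "s > 0"
  shows "Gamma x / Gamma (x + s) \<le> exp (- s * Digamma x)"
proof -
  have "\<exists>\<xi>. x < \<xi> \<and> \<xi> < x + s \<and> ln_Gamma (x + s) - ln_Gamma x = (x + s - x) * Digamma \<xi>"
    using assms by (intro MVT2 derivative_intros impI allI) auto
  then obtain \<xi> where xi: "x < \<xi>" "\<xi> < x + s"
    and eq: "ln_Gamma (x + s) - ln_Gamma x = (x + s - x) * Digamma \<xi>" by blast
  have "Digamma x \<le> Digamma \<xi>" using xi assms by (intro Digamma_real_mono) auto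
  hence le: "s * Digamma x \<le> ln_Gamma (x + s) - ln_Gamma x" using eq assms by simp
  have "Gamma x / Gamma (x + s) = exp (ln_Gamma x - ln_Gamma (x + s))"
    using assms by (simp add: Gamma_real_pos_exp exp_diff)
  also have "\<dots> \<le> exp (- s * Digamma x)" using le by simp
  finally show ?thesis .
qed

lemma Gamma_ratio_0:
  assumes "s > (0::real)"
  shows "((\<lambda>x. Gamma x / Gamma (x + s)) \<longlongrightarrow> 0) at_top"
proof (rule tendsto_sandwich[of "\<lambda>_. 0" _ _ "\<lambda>x. exp (- s * Digamma x)"])
  show "eventually (\<lambda>x. 0 \<le> Gamma x / Gamma (x + s)) at_top"
    using eventually_ge_at_top[of "2::real"] by eventually_elim (use assms in auto)
  show "eventually (\<lambda>x. Gamma x / Gamma (x + s) \<le> exp (- s * Digamma x)) at_top"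
    using eventually_ge_at_top[of "2::real"] by eventually_elim (use assms Gamma_ratio_bound in auto)
  show "((\<lambda>x. 0::real) \<longlongrightarrow> 0) at_top" by simp
  have "filterlim (\<lambda>x. s * Digamma x) at_top at_top"
    using assms by (intro filterlim_tendsto_pos_mult_at_top[OF tendsto_const] Digamma_at_top)
  hence "filterlim (\<lambda>x. - (s * Digamma x)) at_bot at_top"
    by (simp add: filterlim_uminus_at_top)
  hence "((\<lambda>x. exp (- (s * Digamma x))) \<longlongrightarrow> 0) at_top"
    by (rule filterlim_compose[OF exp_at_bot])
  thus "((\<lambda>x. exp (- s * Digamma x)) \<longlongrightarrow> 0) at_top" by simp
qed

lemma Digamma_shift_le:
  assumes "(x::real) \<ge> 1"
  shows "Digamma (x + real N) \<le> Digamma x + real N"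
proof (induction N)
  case (Suc N)
  have "Digamma (x + real (Suc N)) = Digamma (x + real N) + 1 / (x + real N)"
    using assms Digamma_plus1[of "x + real N"] by (simp add: add_ac)
  also have "1 / (x + real N) \<le> 1" using assms by simp
  finally show ?case using Suc by simp
qed simp

lemma Digamma_diff_bound:
  assumes "(x::real) \<ge> 1" "a \<ge> 0"
  shows "0 \<le> Digamma (x + a) - Digamma x" "Digamma (x + a) - Digamma x \<le> real (nat \<lceil>a\<rceil>)"
proof -
  show "0 \<le> Digamma (x + a) - Digamma x" using assms Digamma_real_mono[of x "x+a"] by simp
  have "Digamma (x + a) \<le> Digamma (x + real (nat \<lceil>a\<rceil>))"
    by (rule Digamma_real_mono) (use assms in linarith, use assms real_nat_ceiling_ge[of a] in linarith)
  thus "Digamma (x + a) - Digamma x \<le> real (nat \<lceil>a\<rceil>)" using Digamma_shift_le[OF assms(1), of "nat \<lceil>a\<rceil>"] by linarith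
qed


definition fr :: "real \<Rightarrow> real \<Rightarrow> real" where
  "fr a y = Gamma (1 + y) * rGamma (1 + y - a)"

definition hB :: "real \<Rightarrow> real \<Rightarrow> real" where
  "hB a y = fr a y * (Digamma (1 + y) - Digamma (1 + y - a))"

lemma fr_eq: "1 + y - a > 0 \<Longrightarrow> fr a y = Gamma (1 + y) / Gamma (1 + y - a)"
  by (simp add: fr_def rGamma_inverse_Gamma divide_inverse)

lemma fr_pos: "1 + y - a > 0 \<Longrightarrow> a \<ge> 0 \<Longrightarrow> fr a y > 0"
  by (simp add: fr_eq)

lemma fr_at_top:
  assumes "a > 0"
  shows "filterlim (fr a) at_top at_top"
proof -
  have lim: "filterlim (\<lambda>y::real. 1 + y - a) at_top at_top" by real_asymp
  have "((\<lambda>y. Gamma (1 + y - a) / Gamma (1 + y - a + a)) \<longlongrightarrow> 0) at_top"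
    using filterlim_compose[OF Gamma_ratio_0[OF assms] lim] by simp
  moreover have "eventually (\<lambda>y. 0 < Gamma (1 + y - a) / Gamma (1 + y - a + a)) at_top"
    using eventually_gt_at_top[of a] by (rule eventually_mono) (use assms in auto)
  ultimately have "filterlim (\<lambda>y. inverse (Gamma (1 + y - a) / Gamma (1 + y - a + a))) at_top at_top"
    by (rule filterlim_inverse_at_top)
  moreover have "eventually (\<lambda>y. inverse (Gamma (1 + y - a) / Gamma (1 + y - a + a)) = fr a y) at_top"
    using eventually_gt_at_top[of a] by (rule eventually_mono) (use assms in \<open>auto simp: fr_eq\<close>)
  ultimately show ?thesis by (rule filterlim_at_top_mono[OF _ eventually_mono]) auto
qed

lemma fr_ratio:
  assumes "0 < a" "a < b"
  shows "((\<lambda>y. fr a y / fr b y) \<longlongrightarrow> 0) at_top"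
proof -
  have lim: "filterlim (\<lambda>y::real. 1 + y - b) at_top at_top" by real_asymp
  have "((\<lambda>y. Gamma (1 + y - b) / Gamma (1 + y - b + (b - a))) \<longlongrightarrow> 0) at_top"
    using filterlim_compose[OF Gamma_ratio_0[of "b - a"] lim] assms by simp
  moreover have "eventually (\<lambda>y. Gamma (1 + y - b) / Gamma (1 + y - b + (b - a)) = fr a y / fr b y) at_top"
    using eventually_gt_at_top[of b]
  proof (rule eventually_mono)
    fix y assume y: "b < y"
    have p: "Gamma (1 + y) > 0" "Gamma (1 + y - a) > 0" "Gamma (1 + y - b) > 0"
      using y assms by auto
    have e: "1 + y - b + (b - a) = 1 + y - a" by simp
    show "Gamma (1 + y - b) / Gamma (1 + y - b + (b - a)) = fr a y / fr b y"
      unfolding e using y assms p by (simp add: fr_eq field_simps del: Gamma_real_pos)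
  qed
  ultimately show ?thesis by (rule Lim_transform_eventually)
qed

lemma hB_bound:
  assumes "y \<ge> a" "a \<ge> 0"
  shows "\<bar>hB a y\<bar> \<le> fr a y * real (nat \<lceil>a\<rceil>)"
proof -
  have b: "0 \<le> Digamma (1 + y - a + a) - Digamma (1 + y - a)"
          "Digamma (1 + y - a + a) - Digamma (1 + y - a) \<le> real (nat \<lceil>a\<rceil>)"
    using Digamma_diff_bound[of "1 + y - a" a] assms by auto
  have "fr a y > 0" using assms by (intro fr_pos) auto
  thus ?thesis using b unfolding hB_def by (simp add: abs_mult mult_left_mono)
qed

lemma main_asymp:
  fixes S :: "real set" and D :: "real \<Rightarrow> real" and c :: real
  assumes fin: "finite S" and ne: "S \<noteq> {}" and pos: "\<forall>a\<in>S. a > 0" and nz: "\<forall>a\<in>S. D a \<noteq> 0"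
  shows "filterlim (\<lambda>y. \<bar>(\<Sum>a\<in>S. D a * fr a y) - c\<bar>) at_top at_top"
    and "\<exists>K. eventually (\<lambda>y. \<bar>\<Sum>a\<in>S. D a * hB a y\<bar> \<le> K * \<bar>(\<Sum>a\<in>S. D a * fr a y) - c\<bar>) at_top"
proof -
  define am where "am = Max S"
  have am: "am \<in> S" unfolding am_def using fin ne by simp
  have le: "\<forall>a\<in>S. a \<le> am" unfolding am_def using fin by simp
  define T where "T = S - {am}"
  have lt: "\<forall>a\<in>T. a < am" using le unfolding T_def by force
  have finT: "finite T" using fin unfolding T_def by simp
  have amp: "am > 0" using pos am by simp
  have Dm: "D am \<noteq> 0" using nz am by simp
  define G where "G y = (\<Sum>a\<in>S. D a * fr a y)" for y
  define Q where "Q y = (G y - c) / fr am y" for y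
  have Gsplit: "G y = D am * fr am y + (\<Sum>a\<in>T. D a * fr a y)" for y
    unfolding G_def T_def using fin am by (simp add: sum.remove)
  have ev_pos: "eventually (\<lambda>y. fr am y > 0) at_top"
    using eventually_ge_at_top[of am] by (rule eventually_mono) (use amp in \<open>auto intro!: fr_pos\<close>)
  have evQ: "eventually (\<lambda>y. D am + (\<Sum>a\<in>T. D a * (fr a y / fr am y)) - c * inverse (fr am y) = Q y) at_top"
    using ev_pos
  proof (rule eventually_mono)
    fix y assume p: "fr am y > 0"
    have "Q y = (D am * fr am y + (\<Sum>a\<in>T. D a * fr a y) - c) / fr am y"
      unfolding Q_def Gsplit ..
    also have "\<dots> = D am + (\<Sum>a\<in>T. D a * fr a y) / fr am y - c / fr am y"
      using p by (simp add: field_simps)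
    also have "(\<Sum>a\<in>T. D a * fr a y) / fr am y = (\<Sum>a\<in>T. D a * (fr a y / fr am y))"
      by (simp add: sum_divide_distrib)
    finally show "D am + (\<Sum>a\<in>T. D a * (fr a y / fr am y)) - c * inverse (fr am y) = Q y"
      by (simp add: divide_inverse)
  qed
  have "((\<lambda>y. D am + (\<Sum>a\<in>T. D a * (fr a y / fr am y)) - c * inverse (fr am y)) \<longlongrightarrow>
          D am + (\<Sum>a\<in>T. D a * 0) - c * 0) at_top"
    apply (intro tendsto_intros tendsto_inverse_0_at_top fr_at_top amp)
    using lt pos T_def by (auto intro!: fr_ratio)
  hence Qlim: "(Q \<longlongrightarrow> D am) at_top"
    using evQ by (simp add: Lim_transform_eventually)
  hence Qabs: "((\<lambda>y. \<bar>Q y\<bar>) \<longlongrightarrow> \<bar>D am\<bar>) at_top" by (rule tendsto_rabs)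
  have "filterlim (\<lambda>y. \<bar>Q y\<bar> * fr am y) at_top at_top"
    by (rule filterlim_tendsto_pos_mult_at_top[OF Qabs]) (use Dm amp fr_at_top in auto)
  moreover have "eventually (\<lambda>y. \<bar>Q y\<bar> * fr am y = \<bar>G y - c\<bar>) at_top"
    using ev_pos by (rule eventually_mono) (simp add: Q_def abs_divide)
  ultimately show "filterlim (\<lambda>y. \<bar>(\<Sum>a\<in>S. D a * fr a y) - c\<bar>) at_top at_top"
    unfolding G_def[symmetric] by (rule filterlim_at_top_mono[OF _ eventually_mono]) auto
  define K0 where "K0 = (\<Sum>a\<in>S. \<bar>D a\<bar> * real (nat \<lceil>a\<rceil>))"
  have K0: "K0 \<ge> 0" unfolding K0_def by (intro sum_nonneg) auto
  have ev1: "eventually (\<lambda>y. \<bar>Q y\<bar> > \<bar>D am\<bar> / 2) at_top"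
    using order_tendstoD(1)[OF Qabs, of "\<bar>D am\<bar>/2"] Dm by simp
  have ev2: "eventually (\<lambda>y. \<forall>a\<in>T. fr a y / fr am y < 1) at_top"
    using finT
    by (rule eventually_ball_finite)
       (use lt pos T_def in \<open>auto intro!: order_tendstoD(2)[OF fr_ratio]\<close>)
  have "eventually (\<lambda>y. \<bar>\<Sum>a\<in>S. D a * hB a y\<bar> \<le> (2 * K0 / \<bar>D am\<bar>) * \<bar>G y - c\<bar>) at_top"
    using ev1 ev2 ev_pos eventually_ge_at_top[of am]
  proof eventually_elim
    case (elim y)
    have fa: "fr a y \<le> fr am y" if "a \<in> S" for a
    proof (cases "a = am")
      case False
      hence "a \<in> T" using that T_def by auto
      hence "fr a y / fr am y < 1" using elim by auto
      thus ?thesis using elim by (simp add: divide_less_eq)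
    qed simp
    have "\<bar>\<Sum>a\<in>S. D a * hB a y\<bar> \<le> (\<Sum>a\<in>S. \<bar>D a * hB a y\<bar>)" by (rule sum_abs)
    also have "\<dots> \<le> (\<Sum>a\<in>S. \<bar>D a\<bar> * real (nat \<lceil>a\<rceil>) * fr am y)"
    proof (rule sum_mono)
      fix a assume a: "a \<in> S"
      have "\<bar>hB a y\<bar> \<le> fr a y * real (nat \<lceil>a\<rceil>)"
        using a le pos elim by (intro hB_bound) auto
      also have "\<dots> \<le> fr am y * real (nat \<lceil>a\<rceil>)"
        using fa[OF a] by (intro mult_right_mono) auto
      finally have h: "\<bar>hB a y\<bar> \<le> fr am y * real (nat \<lceil>a\<rceil>)" .
      have "\<bar>D a\<bar> * \<bar>hB a y\<bar> \<le> \<bar>D a\<bar> * (fr am y * real (nat \<lceil>a\<rceil>))"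
        by (rule mult_left_mono[OF h]) simp
      thus "\<bar>D a * hB a y\<bar> \<le> \<bar>D a\<bar> * real (nat \<lceil>a\<rceil>) * fr am y"
        by (simp add: abs_mult mult_ac)
    qed
    also have "\<dots> = K0 * fr am y" unfolding K0_def by (simp add: sum_distrib_right)
    also have "\<dots> \<le> K0 * (2 / \<bar>D am\<bar> * \<bar>G y - c\<bar>)"
    proof (rule mult_left_mono[OF _ K0])
      have "\<bar>G y - c\<bar> = \<bar>Q y\<bar> * fr am y" using elim by (simp add: Q_def abs_divide)
      also have "\<dots> \<ge> \<bar>D am\<bar> / 2 * fr am y" using elim by (intro mult_right_mono) auto
      finally show "fr am y \<le> 2 / \<bar>D am\<bar> * \<bar>G y - c\<bar>" using Dm by (simp add: field_simps)
    qed
    finally show ?case by (simp add: mult_ac)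
  qed
  thus "\<exists>K. eventually (\<lambda>y. \<bar>\<Sum>a\<in>S. D a * hB a y\<bar> \<le> K * \<bar>(\<Sum>a\<in>S. D a * fr a y) - c\<bar>) at_top"
    unfolding G_def by blast
qed


lemma summable_rec_bound:
  fixes a b :: "nat \<Rightarrow> real"
  assumes a0: "\<And>n. 0 \<le> a n" and b0: "\<And>n. 0 \<le> b n" and t: "0 \<le> t" "t < 1"
    and rec: "\<And>n. n \<ge> N \<Longrightarrow> a (Suc n) \<le> t * a n + b n" and sb: "summable b"
  shows "summable a"
proof -
  define Bs where "Bs = suminf (\<lambda>k. b (k + N))"
  have sbN: "summable (\<lambda>k. b (k + N))" using sb by simp
  have bnd: "(\<Sum>k<M. a (k + Suc N)) \<le> (t * a N + Bs) / (1 - t)" for M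
  proof -
    define P where "P = (\<Sum>k<M. a (k + Suc N))"
    have "P \<le> (\<Sum>k<M. t * a (k + N) + b (k + N))"
      unfolding P_def by (intro sum_mono) (use rec in auto)
    also have "\<dots> = t * (\<Sum>k<M. a (k + N)) + (\<Sum>k<M. b (k + N))"
      by (simp add: sum.distrib sum_distrib_left)
    also have "(\<Sum>k<M. b (k + N)) \<le> Bs"
      unfolding Bs_def by (rule sum_le_suminf[OF sbN]) (use b0 in auto)
    also have "(\<Sum>k<M. a (k + N)) \<le> (\<Sum>k<Suc M. a (k + N))"
      by (rule sum_mono2) (use a0 in auto)
    also have "(\<Sum>k<Suc M. a (k + N)) = a N + P"
      unfolding P_def by (subst sum.lessThan_Suc_shift) simp
    finally have "P \<le> t * (a N + P) + Bs" using t by (simp add: mult_left_mono)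
    hence "(1 - t) * P \<le> t * a N + Bs" by (simp add: algebra_simps)
    thus ?thesis unfolding P_def[symmetric] using t by (simp add: field_simps)
  qed
  have "summable (\<lambda>k. a (k + Suc N))"
  proof (rule bounded_imp_summable)
    show "\<And>n. 0 \<le> a (n + Suc N)" by (rule a0)
    fix n show "(\<Sum>k\<le>n. a (k + Suc N)) \<le> (t * a N + Bs) / (1 - t)"
      using bnd[of "Suc n"] by (simp add: lessThan_Suc_atMost)
  qed
  thus ?thesis by (subst summable_iff_shift[symmetric])
qed

lemma group_sum:
  fixes d \<alpha> :: "nat \<Rightarrow> real" and h :: "real \<Rightarrow> real" and m :: nat
  defines "D \<equiv> \<lambda>a. sum d {i. i \<in> {1..m} \<and> \<alpha> i = a}"
  shows "(\<Sum>i=1..m. d i * h (\<alpha> i)) = (\<Sum>a\<in>{a \<in> \<alpha> ` {1..m}. D a \<noteq> 0}. D a * h a)"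
proof -
  have "(\<Sum>i=1..m. d i * h (\<alpha> i)) =
        (\<Sum>a\<in>\<alpha> ` {1..m}. \<Sum>i\<in>{i. i \<in> {1..m} \<and> \<alpha> i = a}. d i * h (\<alpha> i))"
    by (rule sum.group[symmetric]) auto
  also have "\<dots> = (\<Sum>a\<in>\<alpha> ` {1..m}. D a * h a)"
    unfolding D_def sum_distrib_right by (intro sum.cong refl) auto
  also have "\<dots> = (\<Sum>a\<in>{a \<in> \<alpha> ` {1..m}. D a \<noteq> 0}. D a * h a)"
    by (rule sum.mono_neutral_right) auto
  finally show ?thesis .
qed

lemma Gsum_fr: "Gsum m d \<alpha> y = (\<Sum>i=1..m. d i * fr (\<alpha> i) y)"
  unfolding Gsum_def fr_def by (simp add: mult.assoc)

lemma deriv_rGamma_pos: "(b::real) > 0 \<Longrightarrow> deriv rGamma b = - rGamma b * Digamma b"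
  by (rule DERIV_imp_deriv, rule has_field_derivative_rGamma_no_nonpos_int)
     (auto elim!: nonpos_Ints_cases)

lemma Bsum_hB:
  assumes "\<forall>i\<in>{1..m}. 1 + y - \<alpha> i > 0"
  shows "Bsum m d \<alpha> y = (\<Sum>i=1..m. d i * hB (\<alpha> i) y)"
  unfolding Bsum_def
proof (rule sum.cong[OF refl])
  fix i assume "i \<in> {1..m}"
  hence "1 + y - \<alpha> i > 0" using assms by auto
  thus "d i * Gamma (1 + y) * (Digamma (1 + y) * rGamma (1 + y - \<alpha> i) + deriv rGamma (1 + y - \<alpha> i)) =
        d i * hB (\<alpha> i) y"
    by (simp add: deriv_rGamma_pos hB_def fr_def algebra_simps)
qed

lemma seq_lim: "\<beta> > 0 \<Longrightarrow> filterlim (\<lambda>n. \<gamma> + \<beta> * real n) at_top sequentially"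
  by (intro filterlim_tendsto_add_at_top[OF tendsto_const]
        filterlim_tendsto_pos_mult_at_top[OF tendsto_const] filterlim_real_sequentially)


lemma powr_split:
  assumes "(x::real) > 0"
  shows "x powr (\<gamma> + \<beta> * real n) = x powr \<gamma> * (x powr \<beta>) ^ n"
  using assms by (simp add: powr_add powr_powr[symmetric] powr_realpow)

lemma summable_from_abs:
  assumes "(x::real) > 0" "summable (\<lambda>n. \<bar>c n\<bar> * (x powr \<beta>) ^ n)"
  shows "summable (\<lambda>n. c n * x powr (\<gamma> + \<beta> * real n))"
proof (rule summable_rabs_cancel)
  have "summable (\<lambda>n. x powr \<gamma> * (\<bar>c n\<bar> * (x powr \<beta>) ^ n))"
    by (rule summable_mult[OF assms(2)])
  moreover have "(\<lambda>n. \<bar>c n * x powr (\<gamma> + \<beta> * real n)\<bar>) = (\<lambda>n. x powr \<gamma> * (\<bar>c n\<bar> * (x powr \<beta>) ^ n))"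
    using assms(1) by (auto simp: powr_split abs_mult mult_ac)
  ultimately show "summable (\<lambda>n. \<bar>c n * x powr (\<gamma> + \<beta> * real n)\<bar>)" by simp
qed

theorem lemma4p1:
  fixes m :: nat and d \<alpha> :: "nat \<Rightarrow> real" and \<beta> \<nu> \<gamma> :: real
    and c1 c2 :: "nat \<Rightarrow> real"
  assumes alpha_pos: "\<forall>i\<in>{1..m}. \<alpha> i > 0"
    and beta_pos: "\<beta> > 0"
    and gamma_gt: "\<gamma> > -1"
    and root: "Gsum m d \<alpha> \<gamma> = \<nu>\<^sup>2"
    and d1: "deriv (Gsum m d \<alpha>) \<gamma> = 0"
    and d2: "deriv (deriv (Gsum m d \<alpha>)) \<gamma> \<noteq> 0"
    and no_shift_root: "\<forall>n::nat. n \<ge> 1 \<longrightarrow> Gsum m d \<alpha> (\<gamma> + \<beta> * real n) \<noteq> \<nu>\<^sup>2"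
    and rec1: "\<forall>n. c1 (Suc n) = - c1 n / (Gsum m d \<alpha> (\<gamma> + \<beta> * real (Suc n)) - \<nu>\<^sup>2)"
    and rec2: "\<forall>n. c2 (Suc n) = - (c2 n + c1 (Suc n) * Bsum m d \<alpha> (\<gamma> + \<beta> * real (Suc n)))
                                 / (Gsum m d \<alpha> (\<gamma> + \<beta> * real (Suc n)) - \<nu>\<^sup>2)"
  shows "\<forall>x::real. x > 0 \<longrightarrow>
           summable (\<lambda>n. c1 n * x powr (\<gamma> + \<beta> * real n)) \<and>
           summable (\<lambda>n. c2 n * x powr (\<gamma> + \<beta> * real n))"
proof -
  define D where "D = (\<lambda>a. sum d {i. i \<in> {1..m} \<and> \<alpha> i = a})"
  define S where "S = {a \<in> \<alpha> ` {1..m}. D a \<noteq> 0}"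
  have Gg: "Gsum m d \<alpha> y = (\<Sum>a\<in>S. D a * fr a y)" for y
    unfolding Gsum_fr S_def D_def by (rule group_sum)
  have Bg: "Bsum m d \<alpha> y = (\<Sum>a\<in>S. D a * hB a y)" if "\<forall>i\<in>{1..m}. 1 + y - \<alpha> i > 0" for y
    unfolding Bsum_hB[OF that] S_def D_def by (rule group_sum)
  have fin: "finite S" unfolding S_def by simp
  have pos: "\<forall>a\<in>S. a > 0" unfolding S_def using alpha_pos by auto
  have nz: "\<forall>a\<in>S. D a \<noteq> 0" unfolding S_def by auto
  have ne: "S \<noteq> {}"
  proof
    assume "S = {}"
    hence "Gsum m d \<alpha> = (\<lambda>_. 0)" using Gg by (auto intro!: ext)
    moreover have "deriv (\<lambda>_::real. 0::real) = (\<lambda>_. 0)"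
      by (rule ext, rule DERIV_imp_deriv) simp
    ultimately show False using d2 by simp
  qed
  note MA = main_asymp[OF fin ne pos nz, of "\<nu>\<^sup>2"]
  obtain K where K: "eventually (\<lambda>y. \<bar>\<Sum>a\<in>S. D a * hB a y\<bar> \<le> K * \<bar>(\<Sum>a\<in>S. D a * fr a y) - \<nu>\<^sup>2\<bar>) at_top"
    using MA(2) by blast
  have ev3: "eventually (\<lambda>y. \<forall>i\<in>{1..m}. 1 + y - \<alpha> i > 0) at_top"
  proof (rule eventually_ball_finite)
    show "\<forall>i\<in>{1..m}. eventually (\<lambda>y. 1 + y - \<alpha> i > 0) at_top"
    proof
      fix i show "eventually (\<lambda>y. 1 + y - \<alpha> i > 0) at_top"
        using eventually_gt_at_top[of "\<alpha> i"] by (rule eventually_mono) simp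
    qed
  qed simp
  define g where "g = (\<lambda>n::nat. \<gamma> + \<beta> * real n)"
  have glim: "filterlim g at_top sequentially" unfolding g_def using beta_pos by (rule seq_lim)
  have E1: "filterlim (\<lambda>n. \<bar>Gsum m d \<alpha> (g n) - \<nu>\<^sup>2\<bar>) at_top sequentially"
    unfolding Gg using filterlim_compose[OF MA(1) glim] .
  have "eventually (\<lambda>y. \<bar>Bsum m d \<alpha> y\<bar> \<le> \<bar>K\<bar> * \<bar>Gsum m d \<alpha> y - \<nu>\<^sup>2\<bar>) at_top"
    using K ev3
  proof eventually_elim
    case (elim y)
    have "\<bar>Bsum m d \<alpha> y\<bar> \<le> K * \<bar>Gsum m d \<alpha> y - \<nu>\<^sup>2\<bar>" using elim Bg Gg by simp
    also have "\<dots> \<le> \<bar>K\<bar> * \<bar>Gsum m d \<alpha> y - \<nu>\<^sup>2\<bar>" by (intro mult_right_mono) auto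
    finally show ?case .
  qed
  hence E2: "eventually (\<lambda>n. \<bar>Bsum m d \<alpha> (g n)\<bar> \<le> \<bar>K\<bar> * \<bar>Gsum m d \<alpha> (g n) - \<nu>\<^sup>2\<bar>) sequentially"
    using glim unfolding filterlim_iff by blast
  define Dn where "Dn = (\<lambda>n. Gsum m d \<alpha> (g (Suc n)) - \<nu>\<^sup>2)"
  define Bn where "Bn = (\<lambda>n. Bsum m d \<alpha> (g (Suc n)))"
  have r1: "c1 (Suc n) = - c1 n / Dn n" for n using rec1 unfolding Dn_def g_def by simp
  have r2: "c2 (Suc n) = - (c2 n + c1 (Suc n) * Bn n) / Dn n" for n
    using rec2 unfolding Dn_def Bn_def g_def by simp
  have EL: "eventually (\<lambda>n. L \<le> \<bar>Dn n\<bar>) sequentially" for L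
  proof -
    have "eventually (\<lambda>n. L \<le> \<bar>Gsum m d \<alpha> (g n) - \<nu>\<^sup>2\<bar>) sequentially"
      using E1 by (simp add: filterlim_at_top)
    thus ?thesis unfolding Dn_def
      by (rule iffD2[OF eventually_sequentially_Suc[of "\<lambda>n. L \<le> \<bar>Gsum m d \<alpha> (g n) - \<nu>\<^sup>2\<bar>"]])
  qed
  have EB: "eventually (\<lambda>n. \<bar>Bn n\<bar> \<le> \<bar>K\<bar> * \<bar>Dn n\<bar>) sequentially"
    unfolding Bn_def Dn_def
    by (rule iffD2[OF eventually_sequentially_Suc[of "\<lambda>n. \<bar>Bsum m d \<alpha> (g n)\<bar> \<le> \<bar>K\<bar> * \<bar>Gsum m d \<alpha> (g n) - \<nu>\<^sup>2\<bar>"], OF E2])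
  have C1: "summable (\<lambda>n. \<bar>c1 n\<bar> * q ^ n)" if q: "q > 0" for q
  proof -
    obtain N where N: "\<And>n. n \<ge> N \<Longrightarrow> 2 * q \<le> \<bar>Dn n\<bar>"
      using EL[of "2*q"] by (auto simp: eventually_sequentially)
    show ?thesis
    proof (rule summable_rec_bound[where t = "1/2" and b = "\<lambda>_. 0" and N = N])
      fix n assume n: "n \<ge> N"
      have Dp: "\<bar>Dn n\<bar> \<ge> 2 * q" using N[OF n] .
      have "\<bar>c1 (Suc n)\<bar> = \<bar>c1 n\<bar> / \<bar>Dn n\<bar>" by (simp add: r1 abs_divide)
      also have "\<dots> \<le> \<bar>c1 n\<bar> / (2 * q)"
        using Dp q by (intro divide_left_mono) auto
      finally have "\<bar>c1 (Suc n)\<bar> * q ^ Suc n \<le> \<bar>c1 n\<bar> / (2 * q) * q ^ Suc n"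
        using q by (intro mult_right_mono) auto
      also have "\<dots> = 1/2 * (\<bar>c1 n\<bar> * q ^ n)" using q by (simp add: field_simps)
      finally show "\<bar>c1 (Suc n)\<bar> * q ^ Suc n \<le> 1/2 * (\<bar>c1 n\<bar> * q ^ n) + 0" by simp
    qed (use q in auto)
  qed
  have C2: "summable (\<lambda>n. \<bar>c2 n\<bar> * q ^ n)" if q: "q > 0" for q
  proof -
    obtain N where N: "\<And>n. n \<ge> N \<Longrightarrow> 2 * q \<le> \<bar>Dn n\<bar> \<and> \<bar>Bn n\<bar> \<le> \<bar>K\<bar> * \<bar>Dn n\<bar>"
      using eventually_conj[OF EL[of "2*q"] EB] by (auto simp: eventually_sequentially)
    have sb: "summable (\<lambda>n. \<bar>K\<bar> * (\<bar>c1 (Suc n)\<bar> * q ^ Suc n))"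
      using C1[OF q] summable_Suc_iff[of "\<lambda>n. \<bar>c1 n\<bar> * q ^ n"] by (intro summable_mult) simp
    show ?thesis
    proof (rule summable_rec_bound[where t = "1/2" and N = N, OF _ _ _ _ _ sb])
      fix n assume n: "n \<ge> N"
      have Dp: "\<bar>Dn n\<bar> \<ge> 2 * q" and Bb: "\<bar>Bn n\<bar> \<le> \<bar>K\<bar> * \<bar>Dn n\<bar>" using N[OF n] by auto
      have Dpos: "\<bar>Dn n\<bar> > 0" using Dp q by linarith
      have "\<bar>c2 (Suc n)\<bar> = \<bar>c2 n + c1 (Suc n) * Bn n\<bar> / \<bar>Dn n\<bar>" by (simp only: r2 abs_divide abs_minus_cancel)
      also have "\<dots> \<le> (\<bar>c2 n\<bar> + \<bar>c1 (Suc n)\<bar> * \<bar>Bn n\<bar>) / \<bar>Dn n\<bar>"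
        using Dpos by (intro divide_right_mono) (auto simp: abs_mult intro: order_trans[OF abs_triangle_ineq])
      also have "\<dots> = \<bar>c2 n\<bar> / \<bar>Dn n\<bar> + \<bar>c1 (Suc n)\<bar> * (\<bar>Bn n\<bar> / \<bar>Dn n\<bar>)"
        by (simp add: add_divide_distrib)
      also have "\<bar>c2 n\<bar> / \<bar>Dn n\<bar> \<le> \<bar>c2 n\<bar> / (2 * q)"
        using Dp q by (intro divide_left_mono) auto
      also have "\<bar>Bn n\<bar> / \<bar>Dn n\<bar> \<le> \<bar>K\<bar>" using Bb Dpos by (simp add: divide_le_eq)
      finally have "\<bar>c2 (Suc n)\<bar> \<le> \<bar>c2 n\<bar> / (2 * q) + \<bar>c1 (Suc n)\<bar> * \<bar>K\<bar>"
        by (simp add: mult_left_mono)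
      hence "\<bar>c2 (Suc n)\<bar> * q ^ Suc n \<le> (\<bar>c2 n\<bar> / (2 * q) + \<bar>c1 (Suc n)\<bar> * \<bar>K\<bar>) * q ^ Suc n"
        using q by (intro mult_right_mono) auto
      also have "\<dots> = 1/2 * (\<bar>c2 n\<bar> * q ^ n) + \<bar>K\<bar> * (\<bar>c1 (Suc n)\<bar> * q ^ Suc n)"
        using q by (simp add: field_simps)
      finally show "\<bar>c2 (Suc n)\<bar> * q ^ Suc n \<le> 1/2 * (\<bar>c2 n\<bar> * q ^ n) + \<bar>K\<bar> * (\<bar>c1 (Suc n)\<bar> * q ^ Suc n)" .
    qed (use q in auto)
  qed
  show ?thesis
  proof (intro allI impI conjI)
    fix x :: real assume x: "x > 0"
    have q: "x powr \<beta> > 0" using x by simp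
    show "summable (\<lambda>n. c1 n * x powr (\<gamma> + \<beta> * real n))"
      by (rule summable_from_abs[OF x C1[OF q]])
    show "summable (\<lambda>n. c2 n * x powr (\<gamma> + \<beta> * real n))"
      by (rule summable_from_abs[OF x C2[OF q]])
  qed
qed

end
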